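(* Let $\mathcal G=G(n;S)$ be an integral circulant graph on $n$ vertices with symbol $S$. Then $\mathcal G$ is bipartite if and only if $n$ is even and $S=\bigcup_{f\in F}G_n(n/f)$ for a set $F$ of divisors of $n$ such that, for some integer $\ell_0$, every element of the set $\{2\ell_0/f : f\in F\}$ is an odd integer.
   Context: For an integer $n$ and a set $S\subseteq\{1,\dots,n-1\}$ such that $s\in S$ if and only if $n-s\in S$, the circulant graph $G(n;S)$ is the undirected graph on vertex set $\mathbb{Z}_n$ in which $i$ and $j$ are adjacent iff $i-j \bmod n\in S$. A graph is integral if all eigenvalues of its adjacency matrix are integers. For a divisor $d$ of $n$, $G_n(d)=\{k : 1\le k\le n-1,\ \gcd(k,n)=d\}$. *)

theory Defs
  imports "Jordan_Normal_Form.Char_Poly"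
begin

text \<open>Vertex set of G(n;S) is Z_n, represented by {0..<n}; i and j adjacent iff (i - j) mod n \<in> S.\<close>

definition circ_adj :: "nat \<Rightarrow> nat set \<Rightarrow> nat \<Rightarrow> nat \<Rightarrow> bool" where
  "circ_adj n S i j \<longleftrightarrow> (i + n - j) mod n \<in> S"

definition circ_adj_matrix :: "nat \<Rightarrow> nat set \<Rightarrow> complex mat" where
  "circ_adj_matrix n S = mat n n (\<lambda>(i, j). if circ_adj n S i j then 1 else 0)"

definition valid_symbol :: "nat \<Rightarrow> nat set \<Rightarrow> bool" where
  "valid_symbol n S \<longleftrightarrow> S \<subseteq> {1..n-1} \<and> (\<forall>s. s \<in> S \<longleftrightarrow> (s \<in> {1..n-1} \<and> n - s \<in> S))"

definition integral_circulant :: "nat \<Rightarrow> nat set \<Rightarrow> bool" where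
  "integral_circulant n S \<longleftrightarrow> (\<forall>ev. eigenvalue (circ_adj_matrix n S) ev \<longrightarrow> ev \<in> \<int>)"

definition circ_bipartite :: "nat \<Rightarrow> nat set \<Rightarrow> bool" where
  "circ_bipartite n S \<longleftrightarrow> (\<exists>c :: nat \<Rightarrow> bool. \<forall>i<n. \<forall>j<n. circ_adj n S i j \<longrightarrow> c i \<noteq> c j)"

definition Gn :: "nat \<Rightarrow> nat \<Rightarrow> nat set" where
  "Gn n d = {k. 1 \<le> k \<and> k \<le> n - 1 \<and> gcd k n = d}"

end

theory Submission
  imports Defs "HOL-Computational_Algebra.Primes"
begin


definition om :: "nat \<Rightarrow> complex" where "om n = cis (2 * pi / real n)"

lemma om_pow: "om n ^ m = cis (2 * pi * real m / real n)"
  unfolding om_def DeMoivre by (simp add: mult_ac)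

lemma om_pow_n: assumes "n > 0" shows "om n ^ n = 1"
  using assms unfolding om_pow by simp

lemma om_pow_mod: assumes "n > 0" shows "om n ^ m = om n ^ (m mod n)"
proof -
  have "om n ^ m = om n ^ (n * (m div n) + m mod n)" by simp
  also have "\<dots> = (om n ^ n) ^ (m div n) * om n ^ (m mod n)" by (simp only: power_add power_mult)
  finally show ?thesis using om_pow_n[OF assms] by simp
qed

lemma om_pow_eq_1: assumes "n > 0" shows "om n ^ m = 1 \<longleftrightarrow> n dvd m"
proof
  assume h: "om n ^ m = 1"
  have inj: "inj_on (\<lambda>k. cis (2 * pi * real k / real n)) {..<n}"
    using bij_betw_roots_unity[OF assms] by (auto simp: bij_betw_def)
  have "om n ^ (m mod n) = om n ^ 0" using h om_pow_mod[OF assms, of m] by simp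
  hence "cis (2 * pi * real (m mod n) / real n) = cis (2 * pi * real 0 / real n)"
    unfolding om_pow by simp
  hence "m mod n = 0" by (rule inj_onD[OF inj]) (use assms in auto)
  thus "n dvd m" by auto
next
  assume "n dvd m"
  then obtain k where "m = n * k" by auto
  thus "om n ^ m = 1" using om_pow_n[OF assms] by (simp add: power_mult)
qed

lemma sum_om: assumes "n > 0"
  shows "(\<Sum>j<n. om n ^ (j * m)) = (if n dvd m then of_nat n else 0)"
proof (cases "n dvd m")
  case True
  hence "om n ^ (j * m) = 1" for j using om_pow_eq_1[OF assms] by (simp add: power_mult_distrib power_mult[symmetric] mult.commute[of j]) 
  thus ?thesis using True by simp
next
  case False
  define z where "z = om n ^ m"
  have z1: "z \<noteq> 1" using False om_pow_eq_1[OF assms] z_def by simp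
  have "(\<Sum>j<n. om n ^ (j * m)) = (\<Sum>j<n. z ^ j)" by (simp add: z_def power_mult[symmetric] mult.commute)
  also have "\<dots> = (1 - z ^ n) / (1 - z)" using z1 by (simp add: sum_gp_strict)
  also have "z ^ n = 1" using om_pow_n[OF assms] by (simp add: z_def power_mult[symmetric] power_mult mult.commute[of m n])
  finally show ?thesis using False by simp
qed



definition zom :: "nat \<Rightarrow> complex \<Rightarrow> bool" where
  "zom n x \<longleftrightarrow> (\<exists>M::nat\<Rightarrow>nat\<Rightarrow>int. \<forall>i<n. (\<Sum>k<n. of_int (M i k) * om n ^ k) = x * om n ^ i)"

lemma zom_add: "zom n x \<Longrightarrow> zom n y \<Longrightarrow> zom n (x + y)"
proof -
  assume "zom n x" "zom n y"
  then obtain M N where M: "\<forall>i<n. (\<Sum>k<n. of_int (M i k) * om n ^ k) = x * om n ^ i"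
    and N: "\<forall>i<n. (\<Sum>k<n. of_int (N i k) * om n ^ k) = y * om n ^ i" unfolding zom_def by blast
  have "\<forall>i<n. (\<Sum>k<n. of_int (M i k + N i k) * om n ^ k) = (x + y) * om n ^ i"
    using M N by (simp add: distrib_right sum.distrib)
  thus ?thesis unfolding zom_def by (intro exI[of _ "\<lambda>i k. M i k + N i k"])
qed

lemma zom_neg: "zom n x \<Longrightarrow> zom n (- x)"
proof -
  assume "zom n x"
  then obtain M where M: "\<forall>i<n. (\<Sum>k<n. of_int (M i k) * om n ^ k) = x * om n ^ i" unfolding zom_def by blast
  have "\<forall>i<n. (\<Sum>k<n. of_int (- M i k) * om n ^ k) = (- x) * om n ^ i"
    using M by (simp add: sum_negf)
  thus ?thesis unfolding zom_def by (intro exI[of _ "\<lambda>i k. - M i k"])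
qed

lemma zom_mult: "zom n x \<Longrightarrow> zom n y \<Longrightarrow> zom n (x * y)"
proof -
  assume "zom n x" "zom n y"
  then obtain M N where M: "\<forall>i<n. (\<Sum>k<n. of_int (M i k) * om n ^ k) = x * om n ^ i"
    and N: "\<forall>i<n. (\<Sum>k<n. of_int (N i k) * om n ^ k) = y * om n ^ i" unfolding zom_def by blast
  have "(\<Sum>k<n. of_int (\<Sum>l<n. M i l * N l k) * om n ^ k) = (x * y) * om n ^ i" if i: "i < n" for i
  proof -
    have "(\<Sum>k<n. of_int (\<Sum>l<n. M i l * N l k) * om n ^ k)
        = (\<Sum>k<n. \<Sum>l<n. of_int (M i l) * (of_int (N l k) * om n ^ k))"
      by (simp add: sum_distrib_right mult.assoc)
    also have "\<dots> = (\<Sum>l<n. of_int (M i l) * (\<Sum>k<n. of_int (N l k) * om n ^ k))"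
      by (subst sum.swap) (simp add: sum_distrib_left)
    also have "\<dots> = (\<Sum>l<n. of_int (M i l) * (y * om n ^ l))"
      using N by simp
    also have "\<dots> = y * (\<Sum>l<n. of_int (M i l) * om n ^ l)"
      by (simp add: sum_distrib_left mult_ac)
    also have "\<dots> = (x * y) * om n ^ i" using M i by simp
    finally show ?thesis .
  qed
  thus ?thesis unfolding zom_def by (intro exI[of _ "\<lambda>i k. \<Sum>l<n. M i l * N l k"]) blast
qed

lemma sum_delta_of_int: "(i::nat) < n \<Longrightarrow> (\<Sum>k<n. of_int (if k = i then c else 0) * (f k :: complex)) = of_int c * f i"
proof -
  assume i: "i < n"
  have "(\<Sum>k<n. of_int (if k = i then c else 0) * (f k :: complex)) = (\<Sum>k<n. if k = i then of_int c * f k else 0)"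
    by (rule sum.cong) auto
  also have "\<dots> = of_int c * f i" by (subst sum.delta) (simp_all add: i)
  finally show ?thesis .
qed

lemma zom_of_int: "zom n (of_int c)"
proof -
  have "\<forall>i<n. (\<Sum>k<n. of_int (if k = i then c else 0) * om n ^ k) = of_int c * om n ^ i"
    by (simp add: sum_delta_of_int)
  thus ?thesis unfolding zom_def by (intro exI[of _ "\<lambda>i k. if k = i then c else 0"])
qed

lemma zom_om_pow: assumes "n > 0" shows "zom n (om n ^ m)"
proof -
  have "(\<Sum>k<n. of_int (if k = (i + m) mod n then 1 else 0) * om n ^ k) = om n ^ m * om n ^ i" 
    if "i < n" for i
  proof -
    have "(\<Sum>k<n. of_int (if k = (i + m) mod n then 1 else 0) * om n ^ k) = om n ^ ((i + m) mod n)"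
      using sum_delta_of_int[of "(i + m) mod n" n 1 "\<lambda>k. om n ^ k"] assms by simp
    also have "\<dots> = om n ^ (i + m)" using om_pow_mod[OF assms, of "i + m"] by simp
    finally show ?thesis by (simp add: power_add mult.commute)
  qed
  thus ?thesis unfolding zom_def by (intro exI[of _ "\<lambda>i k. if k = (i + m) mod n then 1 else 0"]) blast
qed

lemma zom_sum: "(\<And>x. x \<in> A \<Longrightarrow> zom n (f x)) \<Longrightarrow> zom n (\<Sum>x\<in>A. f x)"
proof (induction A rule: infinite_finite_induct)
  case (infinite A) thus ?case using zom_of_int[of n 0] by simp
next
  case empty thus ?case using zom_of_int[of n 0] by simp
next
  case (insert x F) thus ?case by (simp add: zom_add)
qed

lemma zom_diff: "zom n x \<Longrightarrow> zom n y \<Longrightarrow> zom n (x - y)"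
  using zom_add[of n x "-y"] zom_neg[of n y] by simp

lemma zom_pow: "zom n x \<Longrightarrow> zom n (x ^ k)"
  by (induction k) (auto intro: zom_mult simp: zom_of_int[of n 1, simplified])

lemma zom_algebraic_int: assumes n: "n > 0" and z: "zom n x" shows "algebraic_int x"
proof -
  from z obtain M where M: "\<forall>i<n. (\<Sum>k<n. of_int (M i k) * om n ^ k) = x * om n ^ i" unfolding zom_def by blast
  define A :: "int mat" where "A = mat n n (\<lambda>(i,k). M i k)"
  define V where "V = vec n (\<lambda>i. om n ^ i)"
  have A: "A \<in> carrier_mat n n" unfolding A_def by simp
  have "map_mat of_int A *\<^sub>v V = x \<cdot>\<^sub>v V"
  proof (rule eq_vecI)
    fix i assume "i < dim_vec (x \<cdot>\<^sub>v V)"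
    hence i: "i < n" by (simp add: V_def)
    have "(map_mat of_int A *\<^sub>v V) $ i = (\<Sum>k<n. of_int (M i k) * om n ^ k)"
      using i unfolding A_def V_def by (simp add: mult_mat_vec_def scalar_prod_def atLeast0LessThan)
    also have "\<dots> = (x \<cdot>\<^sub>v V) $ i" using M i by (simp add: V_def)
    finally show "(map_mat of_int A *\<^sub>v V) $ i = (x \<cdot>\<^sub>v V) $ i" .
  qed (simp add: A_def V_def)
  moreover have "V \<noteq> 0\<^sub>v n"
  proof
    assume "V = 0\<^sub>v n"
    hence "V $ 0 = 0\<^sub>v n $ 0" by simp
    thus False using n by (simp add: V_def)
  qed
  moreover have "V \<in> carrier_vec n" by (simp add: V_def)
  ultimately have "eigenvalue (map_mat of_int A) x"
    unfolding eigenvalue_def eigenvector_def using A by auto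
  hence "poly (char_poly (map_mat of_int A)) x = 0"
    using eigenvalue_root_char_poly[of "map_mat of_int A" n x] A by simp
  moreover have "char_poly (map_mat (of_int :: int \<Rightarrow> complex) A) = map_poly of_int (char_poly A)"
    by (rule of_int_hom.char_poly_hom[OF A])
  ultimately have "poly (map_poly of_int (char_poly A)) x = 0" by simp
  moreover have "lead_coeff (char_poly A) = 1" using degree_monic_char_poly[OF A] by simp
  ultimately show ?thesis unfolding algebraic_int_altdef_ipoly by blast
qed

lemma zom_div_int: assumes n: "n > 0" and z: "zom n x" and x: "x * of_int q = of_int m" and q: "q \<noteq> 0"
  shows "q dvd m"
proof -
  have "x = of_int m / of_int q" using x q by (simp add: field_simps)
  hence "x \<in> \<rat>" by simp
  hence "x \<in> \<int>" using rational_algebraic_int_is_int zom_algebraic_int[OF n z] by blast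
  then obtain c where "x = of_int c" by (auto elim: Ints_cases)
  hence "of_int (c * q) = (of_int m :: complex)" using x by simp
  hence "c * q = m" using of_int_eq_iff by blast
  thus ?thesis by (metis dvd_triv_right)
qed



lemma binom_dvd_int:
  assumes q: "prime (q::nat)"
  shows "int q dvd ((x::int) + y) ^ q - x ^ q - y ^ q"
proof -
  have q0: "q > 1" using q prime_gt_1_nat by blast
  have "(x + y) ^ q = (\<Sum>k\<le>q. of_nat (q choose k) * x ^ k * y ^ (q - k))"
    by (simp add: binomial_ring)
  also have "{..q} = insert 0 (insert q {1..<q})" using q0 by auto
  also have "(\<Sum>k\<in>insert 0 (insert q {1..<q}). of_nat (q choose k) * x ^ k * y ^ (q - k))
     = y ^ q + (x ^ q + (\<Sum>k\<in>{1..<q}. of_nat (q choose k) * x ^ k * y ^ (q - k)))"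
    using q0 by (subst sum.insert; auto)+
  finally have e: "(x + y) ^ q - x ^ q - y ^ q = (\<Sum>k\<in>{1..<q}. of_nat (q choose k) * x ^ k * y ^ (q - k))"
    by simp
  have "int q dvd (\<Sum>k\<in>{1..<q}. of_nat (q choose k) * x ^ k * y ^ (q - k))"
  proof (rule dvd_sum)
    fix k assume "k \<in> {1..<q}"
    hence "q dvd (q choose k)" using dvd_choose_prime[of k q] q by auto
    hence "int q dvd of_nat (q choose k)" by simp
    thus "int q dvd of_nat (q choose k) * x ^ k * y ^ (q - k)" by (simp add: mult.assoc)
  qed
  thus ?thesis using e by simp
qed

lemma fermat_nat_int: assumes q: "prime (q::nat)" shows "int q dvd (int a ^ q - int a)"
proof (induction a)
  case 0
  then show ?case using q prime_gt_1_nat by (simp add: power_0_left)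
next
  case (Suc a)
  have "int (Suc a) ^ q - int (Suc a) = (int a ^ q - int a) + ((int a + 1) ^ q - int a ^ q - 1 ^ q)"
    by (simp add: add.commute)
  thus ?case using Suc binom_dvd_int[OF q, of "int a" 1] by (metis dvd_add)
qed

lemma fermat_int: assumes q: "prime (q::nat)" shows "(int q) dvd (m ^ q - m)"
proof -
  have q0: "q > 1" using q prime_gt_1_nat by blast
  define a where "a = nat (m mod int q)"
  have ra: "m mod int q = int a" unfolding a_def using q0 by simp
  have "(m ^ q) mod int q = ((m mod int q) ^ q) mod int q" by (simp add: power_mod)
  also have "\<dots> = (int a ^ q) mod int q" using ra by simp
  also have "\<dots> = int a mod int q" using fermat_nat_int[OF q, of a] by (simp add: mod_eq_dvd_iff)
  also have "\<dots> = m mod int q" using ra by (metis mod_mod_trivial)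
  finally show ?thesis by (simp add: mod_eq_dvd_iff)
qed

lemma binom_frob:
  assumes q: "prime (q::nat)" and x: "zom n x" and y: "zom n y"
  shows "\<exists>g. zom n g \<and> (x + y) ^ q = x ^ q + y ^ q + of_nat q * g"
proof -
  have q0: "q > 1" using q prime_gt_1_nat by blast
  define g where "g = (\<Sum>k\<in>{1..<q}. of_nat ((q choose k) div q) * x ^ k * y ^ (q - k))"
  have "zom n g" unfolding g_def
    by (intro zom_sum zom_mult zom_pow x y) (metis of_int_of_nat_eq zom_of_int)
  have "(x + y) ^ q = (\<Sum>k\<le>q. of_nat (q choose k) * x ^ k * y ^ (q - k))"
    by (simp add: binomial_ring)
  also have "{..q} = insert 0 (insert q {1..<q})" using q0 by auto
  also have "(\<Sum>k\<in>insert 0 (insert q {1..<q}). of_nat (q choose k) * x ^ k * y ^ (q - k))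
     = y ^ q + (x ^ q + (\<Sum>k\<in>{1..<q}. of_nat (q choose k) * x ^ k * y ^ (q - k)))"
    using q0 by (subst sum.insert; auto)+
  also have "(\<Sum>k\<in>{1..<q}. of_nat (q choose k) * x ^ k * y ^ (q - k)) = of_nat q * g"
    unfolding g_def sum_distrib_left
  proof (rule sum.cong)
    fix k assume "k \<in> {1..<q}"
    hence "q dvd (q choose k)" using dvd_choose_prime[of k q] q by auto
    hence "q choose k = q * ((q choose k) div q)" by simp
    hence "(of_nat (q choose k) :: complex) = of_nat q * of_nat ((q choose k) div q)"
      by (metis of_nat_mult)
    thus "of_nat (q choose k) * x ^ k * y ^ (q - k) = of_nat q * (of_nat ((q choose k) div q) * x ^ k * y ^ (q - k))"
      by (simp add: mult.assoc)
  qed simp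
  finally show ?thesis using \<open>zom n g\<close> by (intro exI[of _ g]) (simp add: add_ac)
qed

lemma frob_sum:
  assumes q: "prime (q::nat)" and n: "n > 0" and T: "finite T"
  shows "\<exists>g. zom n g \<and> (\<Sum>s\<in>T. om n ^ (j * s)) ^ q = (\<Sum>s\<in>T. om n ^ (q * j * s)) + of_nat q * g"
  using T
proof (induction T rule: finite_induct)
  case empty
  have "(0::complex) ^ q = 0" using q prime_gt_1_nat by (simp add: power_0_left)
  thus ?case using zom_of_int[of n 0] by (intro exI[of _ 0]) simp
next
  case (insert s F)
  then obtain g0 where g0: "zom n g0" "(\<Sum>s\<in>F. om n ^ (j * s)) ^ q = (\<Sum>s\<in>F. om n ^ (q * j * s)) + of_nat q * g0" by blast
  have zF: "zom n (\<Sum>s\<in>F. om n ^ (j * s))" by (intro zom_sum zom_om_pow n)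
  obtain g1 where g1: "zom n g1" "(om n ^ (j * s) + (\<Sum>s\<in>F. om n ^ (j * s))) ^ q
     = (om n ^ (j * s)) ^ q + (\<Sum>s\<in>F. om n ^ (j * s)) ^ q + of_nat q * g1"
    using binom_frob[OF q zom_om_pow[OF n] zF] by blast
  have e: "(om n ^ (j * s)) ^ q = om n ^ (q * j * s)" by (simp add: power_mult[symmetric] mult_ac)
  show ?case
    using insert(1,2) g0 g1 e zom_add[OF g0(1) g1(1)]
    by (intro exI[of _ "g0 + g1"]) (simp add: algebra_simps)
qed



lemma om_nonzero [simp]: "om n \<noteq> 0"
  by (metis norm_cis om_def norm_zero zero_neq_one)

lemma om_pow_cong: assumes "n > 0" "a mod n = b mod n" shows "om n ^ a = om n ^ b"
  using om_pow_mod[OF assms(1), of a] om_pow_mod[OF assms(1), of b] assms(2) by simp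

lemma modsub: assumes "(i::nat) < n" "k < n"
  shows "(i + n - k) mod n = (if k \<le> i then i - k else i + n - k)"
proof (cases "k \<le> i")
  case True
  hence "i + n - k = (i - k) + n" by simp
  hence "(i + n - k) mod n = (i - k) mod n" by simp
  also have "\<dots> = i - k" using assms by simp
  finally show ?thesis using True by simp
next
  case False thus ?thesis using assms by simp
qed

lemma modsub_inv: assumes "(i::nat) < n" "a < n" shows "(i + n - (i + n - a) mod n) mod n = a"
proof (cases "a \<le> i")
  case True
  hence "i + n - (i + n - a) mod n = a + n" using modsub[OF assms] assms by simp
  thus ?thesis using assms by simp
next
  case False
  hence "i + n - (i + n - a) mod n = a" using modsub[OF assms] assms by simp
  thus ?thesis using assms by simp
qed

lemma dvd_shift: fixes x k n :: nat assumes k: "k < n" shows "n dvd x + (n - k) \<longleftrightarrow> x mod n = k"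
proof -
  have n0: "n > 0" using k by simp
  have e0: "n dvd x + (n - k) \<longleftrightarrow> (x + (n - k)) mod n = 0" by (rule dvd_eq_mod_eq_0)
  have e1: "(x + (n - k)) mod n = (x mod n + (n - k)) mod n" by (rule mod_add_left_eq[symmetric])
  have xm: "x mod n < n" using n0 by (rule mod_less_divisor)
  show ?thesis
  proof (cases "k \<le> x mod n")
    case True
    hence "x mod n + (n - k) = (x mod n - k) + n" using k by simp
    hence "(x mod n + (n - k)) mod n = (x mod n - k) mod n" by simp
    also have "\<dots> = x mod n - k" using xm by simp
    finally show ?thesis using e0 e1 True by auto
  next
    case False
    hence "x mod n + (n - k) < n" using k by simp
    hence "(x mod n + (n - k)) mod n = x mod n + (n - k)" by simp
    moreover have "x mod n + (n - k) \<noteq> 0" using k by simp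
    ultimately show ?thesis using e0 e1 False by auto
  qed
qed

lemma circ_eigen:
  assumes n: "n > 0" and S: "S \<subseteq> {..<n}"
  shows "eigenvalue (circ_adj_matrix n S) (\<Sum>s\<in>S. om n ^ (j * s))"
proof -
  define v where "v = vec n (\<lambda>k. om n ^ (j * (n - k)))"
  define lam where "lam = (\<Sum>s\<in>S. om n ^ (j * s))"
  have A: "circ_adj_matrix n S \<in> carrier_mat n n" by (simp add: circ_adj_matrix_def)
  have fin: "finite S" using S finite_subset by blast
  have "circ_adj_matrix n S *\<^sub>v v = lam \<cdot>\<^sub>v v"
  proof (rule eq_vecI)
    fix i assume "i < dim_vec (lam \<cdot>\<^sub>v v)"
    hence i: "i < n" by (simp add: v_def)
    have "(circ_adj_matrix n S *\<^sub>v v) $ i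
        = (\<Sum>k<n. (if (i + n - k) mod n \<in> S then 1 else 0) * om n ^ (j * (n - k)))"
      using i unfolding circ_adj_matrix_def v_def circ_adj_def
      by (simp add: mult_mat_vec_def scalar_prod_def atLeast0LessThan)
    also have "\<dots> = (\<Sum>s<n. (if s \<in> S then 1 else 0) * (om n ^ (j * s) * om n ^ (j * (n - i))))"
    proof (rule sum.reindex_bij_witness[of _ "\<lambda>k. (i + n - k) mod n" "\<lambda>k. (i + n - k) mod n"])
      fix a assume a: "a \<in> {..<n}"
      show "(i + n - (i + n - a) mod n) mod n = a"
        using a i modsub_inv by auto
      show "(i + n - a) mod n \<in> {..<n}" using n by simp
      have e: "(j * (n - a)) mod n = (j * ((i + n - a) mod n + (n - i))) mod n"
      proof -
        have "(n - a) mod n = ((i + n - a) mod n + (n - i)) mod n"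
        proof (cases "a \<le> i")
          case True
          hence "(i + n - a) mod n + (n - i) = n - a" using modsub[OF i, of a] a i by auto
          thus ?thesis by simp
        next
          case False
          hence "(i + n - a) mod n + (n - i) = (n - a) + n" using modsub[OF i, of a] a i by auto
          thus ?thesis by simp
        qed
        thus ?thesis by (metis mod_mult_right_eq)
      qed
      show "(if (i + n - a) mod n \<in> S then 1 else 0) * (om n ^ (j * ((i + n - a) mod n)) * om n ^ (j * (n - i)))
          = (if (i + n - a) mod n \<in> S then 1 else 0) * om n ^ (j * (n - a))"
        using om_pow_cong[OF n e]
        by (simp add: power_add[symmetric] distrib_left)
    next
      fix b assume "b \<in> {..<n}"
      thus "(i + n - (i + n - b) mod n) mod n = b" using i modsub_inv by auto
    next
      fix b assume "b \<in> {..<n}"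
      thus "(i + n - b) mod n \<in> {..<n}" using n by auto
    qed
    also have "\<dots> = (\<Sum>s\<in>S. om n ^ (j * s)) * om n ^ (j * (n - i))"
    proof -
      have "(\<Sum>s<n. (if s \<in> S then 1 else 0) * (om n ^ (j * s) * om n ^ (j * (n - i))))
          = (\<Sum>s<n. if s \<in> S then om n ^ (j * s) * om n ^ (j * (n - i)) else 0)"
        by (rule sum.cong) auto
      also have "\<dots> = (\<Sum>s\<in>{..<n} \<inter> S. om n ^ (j * s) * om n ^ (j * (n - i)))"
        by (rule sum.inter_restrict[symmetric]) simp
      also have "{..<n} \<inter> S = S" using S by auto
      finally show ?thesis by (simp add: sum_distrib_right)
    qed
    also have "\<dots> = (lam \<cdot>\<^sub>v v) $ i" using i by (simp add: lam_def v_def)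
    finally show "(circ_adj_matrix n S *\<^sub>v v) $ i = (lam \<cdot>\<^sub>v v) $ i" .
  qed (simp add: v_def circ_adj_matrix_def)
  moreover have "v \<noteq> 0\<^sub>v n"
  proof
    assume "v = 0\<^sub>v n"
    hence "v $ 0 = 0\<^sub>v n $ 0" by simp
    thus False using n by (simp add: v_def)
  qed
  moreover have "v \<in> carrier_vec n" by (simp add: v_def)
  ultimately show ?thesis
    unfolding eigenvalue_def eigenvector_def lam_def using A by auto
qed



lemma inv_dft:
  assumes n: "n > 0" and fin: "finite S" and k: "k < n"
  shows "(\<Sum>j<n. (\<Sum>s\<in>S. om n ^ (j * e s)) * om n ^ (j * (n - k)))
       = of_nat n * of_nat (card {s\<in>S. e s mod n = k})"
proof -
  have "(\<Sum>j<n. (\<Sum>s\<in>S. om n ^ (j * e s)) * om n ^ (j * (n - k)))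
      = (\<Sum>j<n. \<Sum>s\<in>S. om n ^ (j * (e s + (n - k))))"
    by (simp add: sum_distrib_right power_add distrib_left)
  also have "\<dots> = (\<Sum>s\<in>S. \<Sum>j<n. om n ^ (j * (e s + (n - k))))"
    by (rule sum.swap)
  also have "\<dots> = (\<Sum>s\<in>S. if e s mod n = k then of_nat n else 0)"
    using sum_om[OF n] dvd_shift[OF k] by simp
  also have "\<dots> = (\<Sum>s\<in>{s\<in>S. e s mod n = k}. of_nat n)"
    by (rule sum.inter_filter[symmetric, OF fin])
  also have "\<dots> = of_nat n * of_nat (card {s\<in>S. e s mod n = k})"
    by (simp add: mult.commute)
  finally show ?thesis .
qed

lemma prime_closed:
  assumes n: "n > 0" and S: "S \<subseteq> {..<n}"
    and ints: "\<And>j. (\<Sum>s\<in>S. om n ^ (j * s)) \<in> \<int>"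
    and q: "prime (q::nat)" and qn: "\<not> q dvd n" and s: "s \<in> S"
  shows "(q * s) mod n \<in> S"
proof (rule ccontr)
  assume nk: "(q * s) mod n \<notin> S"
  define k where "k = (q * s) mod n"
  have k: "k < n" using n by (simp add: k_def)
  have fin: "finite S" using S finite_subset by blast
  have q1: "q > 1" using q prime_gt_1_nat by blast
  have "\<forall>j. \<exists>m. (\<Sum>s\<in>S. om n ^ (j * s)) = of_int m" using ints by (metis Ints_cases)
  then obtain lam where lam: "\<And>j. (\<Sum>s\<in>S. om n ^ (j * s)) = of_int (lam j)" by metis
  have "\<exists>c. lam j - lam (q * j) = int q * c" for j
  proof -
    obtain g where g: "zom n g" "(\<Sum>s\<in>S. om n ^ (j * s)) ^ q = (\<Sum>s\<in>S. om n ^ (q * j * s)) + of_nat q * g"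
      using frob_sum[OF q n fin] by blast
    obtain t where t: "lam j ^ q - lam j = int q * t" using fermat_int[OF q, of "lam j"] by (auto elim: dvdE)
    have "of_int (lam j) ^ q = of_int (lam (q * j)) + of_nat q * g"
      using g(2) lam[of j] lam[of "q * j"] by simp
    hence "(g - of_int t) * of_int (int q) = of_int (lam j - lam (q * j))"
      using arg_cong[OF t, of "of_int :: int \<Rightarrow> complex"] by (simp add: algebra_simps)
    hence "int q dvd lam j - lam (q * j)"
      using zom_div_int[OF n zom_diff[OF g(1) zom_of_int]] q1 by simp
    thus ?thesis by (auto elim: dvdE)
  qed
  then obtain c where c: "\<And>j. lam j - lam (q * j) = int q * c j" by metis
  have A1: "{s'\<in>S. s' mod n = k} = {}" using nk S k_def by auto
  have A2: "{s'\<in>S. (q * s') mod n = k} = {s}"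
  proof
    show "{s} \<subseteq> {s'\<in>S. (q * s') mod n = k}" using s k_def by auto
    show "{s'\<in>S. (q * s') mod n = k} \<subseteq> {s}"
    proof
      fix s' assume "s' \<in> {s'\<in>S. (q * s') mod n = k}"
      hence s': "s' \<in> S" "(q * s') mod n = (q * s) mod n" by (auto simp: k_def)
      have cop: "coprime (int n) (int q)" using q qn
        by (metis coprime_commute prime_imp_coprime coprime_int_iff)
      have "int n dvd int q * (int s' - int s)"
        using s'(2) by (metis mod_eq_dvd_iff of_nat_mult zmod_int right_diff_distrib)
      hence dv: "int n dvd int s' - int s" using cop by (metis coprime_dvd_mult_right_iff)
      have b: "int s' < int n" "int s < int n" using s'(1) s S by auto
      have "int s' - int s = 0"
      proof (rule ccontr)
        assume h: "int s' - int s \<noteq> 0"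
        have "\<bar>int n\<bar> \<le> \<bar>int s' - int s\<bar>" by (rule dvd_imp_le_int[OF h dv])
        moreover have "\<bar>int s' - int s\<bar> < int n" using b by (simp add: abs_less_iff)
        ultimately show False by simp
      qed
      hence "int s' = int s" by simp
      thus "s' \<in> {s}" by simp
    qed
  qed
  have e1: "(\<Sum>j<n. of_int (lam j) * om n ^ (j * (n - k))) = 0"
    using inv_dft[OF n fin k, of "\<lambda>s. s"] A1 lam by simp
  have e2: "(\<Sum>j<n. of_int (lam (q * j)) * om n ^ (j * (n - k))) = of_nat n"
  proof -
    have "(\<Sum>j<n. of_int (lam (q * j)) * om n ^ (j * (n - k)))
        = (\<Sum>j<n. (\<Sum>s\<in>S. om n ^ (j * (q * s))) * om n ^ (j * (n - k)))"
    proof (rule sum.cong[OF refl])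
      fix j
      have "(\<Sum>s\<in>S. om n ^ (j * (q * s))) = (\<Sum>s\<in>S. om n ^ ((q * j) * s))"
        by (rule sum.cong[OF refl]) (simp add: mult_ac)
      also have "\<dots> = of_int (lam (q * j))" by (rule lam)
      finally show "of_int (lam (q * j)) * om n ^ (j * (n - k)) = (\<Sum>s\<in>S. om n ^ (j * (q * s))) * om n ^ (j * (n - k))"
        by simp
    qed
    also have "\<dots> = of_nat n" using inv_dft[OF n fin k, of "\<lambda>s. q * s"] A2 by simp
    finally show ?thesis .
  qed
  define X where "X = (\<Sum>j<n. of_int (c j) * om n ^ (j * (n - k)))"
  have zX: "zom n X" unfolding X_def by (intro zom_sum zom_mult zom_of_int zom_om_pow n)
  have "X * of_int (int q) = (\<Sum>j<n. of_int (lam j - lam (q * j)) * om n ^ (j * (n - k)))"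
    unfolding X_def c by (simp add: sum_distrib_left sum_distrib_right mult_ac)
  also have "\<dots> = of_int (- int n)"
    using e1 e2 by (simp add: left_diff_distrib sum_subtractf)
  finally have h: "X * of_int (int q) = of_int (- int n)" .
  have "int q dvd - int n" by (rule zom_div_int[OF n zX h]) (use q1 in simp)
  thus False using qn by simp
qed



lemma unit_closed:
  assumes n: "n > 0" and S: "S \<subseteq> {..<n}"
    and ints: "\<And>j. (\<Sum>s\<in>S. om n ^ (j * s)) \<in> \<int>"
    and s: "s \<in> S"
  shows "coprime u n \<Longrightarrow> (u * s) mod n \<in> S"
proof (induction u rule: less_induct)
  case (less u)
  show ?case
  proof (cases "u = 1")
    case True thus ?thesis using s S by auto
  next
    case False
    show ?thesis
    proof (cases "u = 0")
      case True
      hence "n = 1" using less.prems by simp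
      thus ?thesis using s S by auto
    next
      case False
      obtain q where q: "prime q" "q dvd u" using prime_factor_nat[OF \<open>u \<noteq> 1\<close>] by blast
      then obtain u' where u': "u = q * u'" by (auto elim: dvdE)
      have q1: "q > 1" using q prime_gt_1_nat by blast
      have "u' < u" using u' q1 False by simp
      moreover have "coprime u' n" using less.prems u' by simp
      ultimately have IH: "(u' * s) mod n \<in> S" using less.IH by blast
      have qn: "\<not> q dvd n"
      proof
        assume "q dvd n"
        hence "q dvd gcd u n" using q by simp
        thus False using less.prems q1 by simp
      qed
      have "(q * ((u' * s) mod n)) mod n \<in> S" by (rule prime_closed[OF n S ints q(1) qn IH])
      thus ?thesis using u' by (simp add: mod_mult_right_eq mult.assoc)
    qed
  qed
qed

lemma lift_unit:
  fixes n v m :: nat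
  assumes n: "n > 0" and cv: "coprime v m" and mn: "m dvd n"
  shows "\<exists>u. coprime u n \<and> u mod m = v mod m"
proof -
  define P where "P = {p \<in> prime_factors n. \<not> p dvd v}"
  define w where "w = \<Prod>P"
  define u where "u = v + m * w"
  have finP: "finite P" unfolding P_def by simp
  have "coprime u n"
  proof (rule ccontr)
    assume "\<not> coprime u n"
    hence "gcd u n \<noteq> 1" by (simp add: coprime_iff_gcd_eq_1)
    then obtain p where p: "prime p" "p dvd gcd u n" using prime_factor_nat by blast
    hence pu: "p dvd u" and pn: "p dvd n" by auto
    show False
    proof (cases "p dvd v")
      case True
      have "\<not> p dvd m"
      proof
        assume "p dvd m"
        hence "p dvd gcd v m" using True by simp
        thus False using cv p(1) by (simp add: prime_gt_1_nat)
      qed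
      moreover have "\<not> p dvd w"
      proof
        assume "p dvd w"
        then obtain x where x: "x \<in> P" "p dvd x" using prime_dvd_prod_iff[OF finP p(1)] unfolding w_def by auto
        hence "prime x" "\<not> x dvd v" unfolding P_def by auto
        hence "p = x" using x(2) p(1) by (simp add: primes_dvd_imp_eq)
        thus False using True \<open>\<not> x dvd v\<close> by simp
      qed
      ultimately have "\<not> p dvd m * w" using p(1) by (simp add: prime_dvd_mult_iff)
      moreover have "p dvd m * w" using pu True unfolding u_def by (simp add: dvd_add_right_iff)
      ultimately show False by simp
    next
      case False
      have "p \<in> P" unfolding P_def using p(1) pn n False by (auto simp: in_prime_factors_iff)
      hence "p dvd w" unfolding w_def using dvd_prodI[OF finP, of p "\<lambda>x. x"] by simp
      hence "p dvd m * w" by simp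
      hence "p dvd v" using pu unfolding u_def by (simp add: dvd_add_left_iff)
      thus False using False by simp
    qed
  qed
  moreover have "u mod m = v mod m" unfolding u_def by simp
  ultimately show ?thesis by blast
qed

lemma gcd_closed:
  assumes n: "n > 0" and S: "S \<subseteq> {..<n}"
    and ints: "\<And>j. (\<Sum>s\<in>S. om n ^ (j * s)) \<in> \<int>"
    and s: "s \<in> S" and s0: "s > 0" and k: "k < n" and g: "gcd k n = gcd s n"
  shows "k \<in> S"
proof -
  define d where "d = gcd s n"
  have d0: "d > 0" using n by (simp add: d_def)
  obtain s' where s': "s = d * s'" unfolding d_def by (metis gcd_dvd1 dvdE)
  obtain k' where k': "k = d * k'" using g unfolding d_def by (metis gcd_dvd1 dvdE)
  obtain m where m: "n = d * m" unfolding d_def by (metis gcd_dvd2 dvdE)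
  have cs: "coprime s' m"
  proof -
    have "gcd s n = d * gcd s' m" unfolding s' m by (rule gcd_mult_distrib_nat[symmetric])
    hence h1: "d = d * gcd s' m" unfolding d_def[symmetric] .
    have "d * gcd s' m = d * 1" using h1 by (simp only: mult_1_right)
    hence "gcd s' m = 1" using d0 by (simp only: mult_left_cancel[of d] neq0_conv[symmetric])
    thus ?thesis by (simp add: coprime_iff_gcd_eq_1)
  qed
  have ck: "coprime k' m"
  proof -
    have "gcd k n = d * gcd k' m" unfolding k' m by (rule gcd_mult_distrib_nat[symmetric])
    hence h1: "d = d * gcd k' m" unfolding g d_def[symmetric] .
    have "d * gcd k' m = d * 1" using h1 by (simp only: mult_1_right)
    hence "gcd k' m = 1" using d0 by (simp only: mult_left_cancel[of d] neq0_conv[symmetric])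
    thus ?thesis by (simp add: coprime_iff_gcd_eq_1)
  qed
  have "s' \<noteq> 0" using s0 s' by auto
  then obtain x y where xy: "s' * x = m * y + gcd s' m" using bezout_nat by blast
  hence xy': "s' * x = m * y + 1" using cs by simp
  have cx: "coprime x m"
  proof (rule ccontr)
    assume "\<not> coprime x m"
    hence "gcd x m \<noteq> 1" by (simp add: coprime_iff_gcd_eq_1)
    then obtain p where p: "prime p" "p dvd gcd x m" using prime_factor_nat by blast
    hence "p dvd s' * x" "p dvd m * y" by auto
    hence "p dvd 1" using xy' by (metis dvd_add_right_iff)
    thus False using p(1) by simp
  qed
  define v where "v = x * k'"
  have cv: "coprime v m" using cx ck unfolding v_def by simp
  obtain u where u: "coprime u n" "u mod m = v mod m"
    using lift_unit[OF n cv] m by auto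
  have "(v * s') mod m = k' mod m"
  proof -
    have "v * s' = k' * (m * y + 1)" unfolding v_def using xy' by (simp add: mult_ac)
    also have "\<dots> = k' + m * (k' * y)" by (simp add: algebra_simps)
    finally show ?thesis by simp
  qed
  hence "(u * s') mod m = k' mod m" using u(2) by (metis mod_mult_left_eq)
  hence "(d * (u * s')) mod (d * m) = (d * k') mod (d * m)" by (metis mult_mod_right)
  hence "(u * s) mod n = k mod n" using s' k' m by (simp add: mult_ac)
  hence "(u * s) mod n = k" using k by simp
  thus ?thesis using unit_closed[OF n S ints s u(1)] by simp
qed



lemma decomp2: "(x::nat) \<noteq> 0 \<Longrightarrow> \<exists>r w. odd w \<and> x = 2 ^ r * w"
proof (induction x rule: less_induct)
  case (less x)
  show ?case
  proof (cases "odd x")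
    case True thus ?thesis by (intro exI[of _ 0] exI[of _ x]) simp
  next
    case False
    then obtain y where y: "x = 2 * y" by (auto elim: evenE)
    hence "y < x" "y \<noteq> 0" using less.prems by auto
    then obtain r w where "odd w" "y = 2 ^ r * w" using less.IH by blast
    thus ?thesis using y by (intro exI[of _ "Suc r"] exI[of _ w]) simp
  qed
qed

lemma uniq2_aux: assumes "2 ^ r * (a::nat) = 2 ^ t * b" "odd a" "odd b" "r < t" shows False
proof -
  have "2 ^ t = 2 ^ r * (2::nat) ^ (t - r)" using assms(4) by (simp add: power_add[symmetric])
  hence "2 ^ r * a = 2 ^ r * (2 ^ (t - r) * b)" using assms(1) by (simp add: mult.assoc)
  hence "a = 2 ^ (t - r) * b" by simp
  moreover have "t - r > 0" using assms(4) by simp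
  ultimately have "even a" by simp
  thus False using assms(2) by simp
qed

lemma uniq2: assumes "2 ^ r * (a::nat) = 2 ^ t * b" "odd a" "odd b" shows "r = t"
  using uniq2_aux[OF assms] uniq2_aux[OF assms(1)[symmetric] assms(3) assms(2)] by (meson linorder_neqE_nat)

definition Vt :: "nat \<Rightarrow> nat set \<Rightarrow> nat \<Rightarrow> bool" where
  "Vt n S t \<longleftrightarrow> 2 ^ (t + 1) dvd n \<and> (\<forall>s\<in>S. \<exists>w. odd w \<and> s = 2 ^ t * w)"

lemma par_aux: "(a::nat) mod 2 = (b + 1) mod 2 \<Longrightarrow> odd a \<noteq> odd b" by presburger

lemma parity_div: "((x::nat) div P) mod 2 = (x mod (P * 2)) div P"
proof (cases "P = 0")
  case True thus ?thesis by simp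
next
  case False
  have "x mod (P * 2) = P * (x div P mod 2) + x mod P" by (rule mod_mult2_eq)
  also have "\<dots> = x mod P + (x div P mod 2) * P" by (simp only: add.commute mult.commute)
  finally have "x mod (P * 2) div P = (x mod P + (x div P mod 2) * P) div P" by (simp only:)
  also have "\<dots> = x div P mod 2 + x mod P div P" using False by (rule div_mult_self1)
  also have "x mod P div P = 0" using False by simp
  finally show ?thesis by simp
qed

lemma L1: assumes n: "n \<ge> 1" and V: "Vt n S t" shows "circ_bipartite n S"
proof -
  define P :: nat where "P = 2 ^ t"
  define Q :: nat where "Q = P * 2"
  have Qn: "Q dvd n" using V by (simp add: Vt_def Q_def P_def mult.commute)
  have P0: "P > 0" by (simp add: P_def)
  have "\<forall>i<n. \<forall>j<n. circ_adj n S i j \<longrightarrow> odd (i div P) \<noteq> odd (j div P)"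
  proof (intro allI impI)
    fix i j assume i: "i < n" and j: "j < n" and adj: "circ_adj n S i j"
    define s where "s = (i + n - j) mod n"
    have sS: "s \<in> S" using adj by (simp add: circ_adj_def s_def)
    then obtain w where w: "odd w" "s = P * w" using V by (auto simp: Vt_def P_def)
    have sQ: "s mod Q = P"
    proof -
      have "s mod Q = P * (w mod 2)" unfolding Q_def w(2) by (rule mult_mod_right[symmetric])
      thus ?thesis using w(1) by (simp add: odd_iff_mod_2_eq_one)
    qed
    have "(i + n - j) mod Q = s mod Q" unfolding s_def using Qn by (rule mod_mod_cancel[symmetric])
    hence e1: "(i + n - j) mod Q = P" using sQ by simp
    have nQ: "n mod Q = 0" using Qn by simp
    have "i mod Q = (i + n mod Q) mod Q" using nQ by simp
    also have "\<dots> = (i + n) mod Q" by (rule mod_add_right_eq)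
    also have "i + n = (i + n - j) + j" using j by simp
    also have "((i + n - j) + j) mod Q = (P + j) mod Q" using e1 by (metis mod_add_left_eq)
    finally have e2: "i mod Q = (j + P) mod Q" by (simp add: add.commute)
    have "(i div P) mod 2 = ((j + P) div P) mod 2"
      using parity_div[of i P] parity_div[of "j + P" P] e2 unfolding Q_def by simp
    also have "(j + P) div P = j div P + 1" using P0 by simp
    finally have "(i div P) mod 2 = (j div P + 1) mod 2" .
    thus "odd (i div P) \<noteq> odd (j div P)" by (rule par_aux)
  qed
  thus ?thesis unfolding circ_bipartite_def by (intro exI[of _ "\<lambda>i. odd (i div P)"])
qed



lemma adj_step:
  fixes x :: nat
  assumes n: "n > 0" and s: "s < n"
  shows "((x + s) mod n + n - x mod n) mod n = s"
proof -
  define a where "a = x mod n"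
  have a: "a < n" using n by (simp add: a_def)
  have b: "(x + s) mod n = (a + s) mod n" unfolding a_def by (simp add: mod_add_left_eq)
  show ?thesis
  proof (cases "a + s < n")
    case True
    hence "(x + s) mod n = a + s" using b by simp
    hence "(x + s) mod n + n - a = s + n" by simp
    thus ?thesis using s a_def by simp
  next
    case False
    hence "(a + s) mod n = a + s - n" using a s by (simp add: mod_if)
    hence "(x + s) mod n + n - a = s" using b False by simp
    thus ?thesis using s a_def by simp
  qed
qed

lemma L2:
  assumes n: "n \<ge> 1" and val: "valid_symbol n S" and s0: "s0 \<in> S" and bip: "circ_bipartite n S"
  shows "\<exists>t. Vt n S t"
proof -
  have n0: "n > 0" using n by simp
  have Ssub: "S \<subseteq> {1..n-1}" and Siff: "\<And>s. s \<in> S \<longleftrightarrow> (s \<in> {1..n-1} \<and> n - s \<in> S)"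
    using val unfolding valid_symbol_def by blast+
  have Sb: "1 \<le> s \<and> s < n" if "s \<in> S" for s
  proof -
    have "s \<in> {1..n-1}" using Ssub that by blast
    thus ?thesis using n by auto
  qed
  have Sm: "n - s \<in> S" if "s \<in> S" for s
  proof -
    have h: "1 \<le> s \<and> s < n" by (rule Sb[OF that])
    have e: "n - (n - s) = s" using h by simp
    have "n - s \<in> {1..n-1} \<and> n - (n - s) \<in> S" unfolding e using h that by auto
    thus ?thesis by (rule iffD2[OF Siff])
  qed
  obtain c :: "nat \<Rightarrow> bool" where c: "\<forall>i<n. \<forall>j<n. circ_adj n S i j \<longrightarrow> c i \<noteq> c j"
    using bip unfolding circ_bipartite_def by blast
  define C where "C x = c (x mod n)" for x
  have F1: "C (x + s) = (\<not> C x)" if "s \<in> S" for x s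
  proof -
    have "circ_adj n S ((x + s) mod n) (x mod n)"
      unfolding circ_adj_def using adj_step[OF n0, of s x] Sb[OF that] that by simp
    hence "c ((x + s) mod n) \<noteq> c (x mod n)" using c n0 by simp
    thus ?thesis unfolding C_def by blast
  qed
  have F2: "C (x + m * s) = (if even m then C x else \<not> C x)" if "s \<in> S" for x m s
  proof (induction m)
    case 0 thus ?case by simp
  next
    case (Suc m)
    have "C (x + Suc m * s) = C ((x + m * s) + s)" by (simp add: add_ac)
    also have "\<dots> = (\<not> C (x + m * s))" using F1[OF that] by blast
    finally show ?case using Suc by auto
  qed
  have F3: "even (a + b)" if "s1 \<in> S" "s2 \<in> S" "a * s1 + b * s2 = n * z" for a b s1 s2 z
  proof -
    have "C (0 + a * s1 + b * s2) = (if even b then C (0 + a * s1) else \<not> C (0 + a * s1))"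
      using F2[OF that(2), of "0 + a * s1" b] by simp
    also have "C (0 + a * s1) = (if even a then C 0 else \<not> C 0)" using F2[OF that(1), of 0 a] .
    finally have e: "C (a * s1 + b * s2) = (if even b then (if even a then C 0 else \<not> C 0) else \<not> (if even a then C 0 else \<not> C 0))" by simp
    have "C (a * s1 + b * s2) = C 0" unfolding that(3) C_def by simp
    thus ?thesis using e by (auto split: if_splits)
  qed
  have s00: "s0 \<noteq> 0" using Sb[OF s0] by simp
  obtain t u where tu: "odd u" "s0 = 2 ^ t * u" using decomp2[OF s00] by blast
  have part_a: "2 ^ (t + 1) dvd n"
  proof -
    obtain e oo where eo: "odd oo" "n = 2 ^ e * oo" using decomp2[of n] n by auto
    show ?thesis
    proof (cases "t < e")
      case True
      hence "t + 1 \<le> e" by simp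
      hence "2 ^ (t + 1) dvd (2::nat) ^ e" by (rule le_imp_power_dvd)
      thus ?thesis using eo by simp
    next
      case False
      have "oo * s0 + 0 * s0 = n * (2 ^ (t - e) * u)"
        using False eo tu by (simp add: mult_ac power_add[symmetric])
      hence "even (oo + 0)" using F3[OF s0 s0] by blast
      thus ?thesis using eo by simp
    qed
  qed
  have part_b: "\<exists>w. odd w \<and> s = 2 ^ t * w" if s: "s \<in> S" for s
  proof -
    have "s \<noteq> 0" using Sb[OF s] by simp
    then obtain r w where rw: "odd w" "s = 2 ^ r * w" using decomp2 by blast
    have sn: "s \<le> n" "s0 \<le> n" using Sb[OF s] Sb[OF s0] by auto
    consider "r = t" | "r > t" | "r < t" by linarith
    thus ?thesis
    proof cases
      case 1 thus ?thesis using rw by blast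
    next
      case 2
      have "2 ^ (r - t) * w * s0 + u * (n - s) = n * u"
      proof -
        have "2 ^ (r - t) * w * s0 = u * s" using 2 rw tu
          by (simp add: mult_ac power_add[symmetric])
        thus ?thesis using sn by (simp add: diff_mult_distrib2 mult_ac)
      qed
      hence "even (2 ^ (r - t) * w + u)" using F3[OF s0 Sm[OF s]] by blast
      moreover have "even (2 ^ (r - t) * w)" using 2 by simp
      ultimately show ?thesis using tu(1) by simp
    next
      case 3
      have "2 ^ (t - r) * u * s + w * (n - s0) = n * w"
      proof -
        have "2 ^ (t - r) * u * s = w * s0" using 3 rw tu
          by (simp add: mult_ac power_add[symmetric])
        thus ?thesis using sn by (simp add: diff_mult_distrib2 mult_ac)
      qed
      hence "even (2 ^ (t - r) * u + w)" using F3[OF s Sm[OF s0]] by blast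
      moreover have "even (2 ^ (t - r) * u)" using 3 by simp
      ultimately show ?thesis using rw(1) by simp
    qed
  qed
  show ?thesis unfolding Vt_def using part_a part_b by blast
qed



lemma div_div_self: assumes "(n::nat) > 0" "d dvd n" shows "n div (n div d) = d"
proof -
  obtain m where m: "n = d * m" using assms(2) by (auto elim: dvdE)
  have "d > 0" "m > 0" using assms(1) m by auto
  thus ?thesis using m by simp
qed

lemma L3:
  assumes n: "n \<ge> 1" and F: "F \<subseteq> {f. f dvd n}" and SF: "S = (\<Union>f\<in>F. Gn n (n div f))"
    and l0: "\<forall>f\<in>F. \<exists>k::int. odd k \<and> 2 * l0 = k * int f" and s0: "s0 \<in> S"
  shows "\<exists>t. Vt n S t"
proof -
  obtain f0 where f0: "f0 \<in> F" "s0 \<in> Gn n (n div f0)" using s0 SF by blast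
  obtain K where K: "\<And>f. f \<in> F \<Longrightarrow> odd (K f) \<and> 2 * l0 = K f * int f" using l0 by metis
  have fpos: "f > 0" if "f \<in> F" for f using F that n by (auto intro: Nat.gr0I)
  have fdvd: "f dvd n" if "f \<in> F" for f using F that by blast
  have feven: "even f" if f: "f \<in> F" for f
  proof -
    have "even (K f * int f)" using K[OF f] by (metis dvd_triv_left)
    hence "even (int f)" using K[OF f] by simp
    thus ?thesis by simp
  qed
  define a where "a f = nat \<bar>K f\<bar>" for f
  have aodd: "odd (a f)" if "f \<in> F" for f
  proof -
    have "odd \<bar>K f\<bar>" using K[OF that] by simp
    thus ?thesis unfolding a_def by (simp add: even_nat_iff)
  qed
  have af: "a f * f = a f0 * f0" if f: "f \<in> F" for f
  proof -
    have "K f * int f = K f0 * int f0" using K[OF f] K[OF f0(1)] by simp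
    hence "\<bar>K f * int f\<bar> = \<bar>K f0 * int f0\<bar>" by simp
    hence "\<bar>K f\<bar> * int f = \<bar>K f0\<bar> * int f0" by (simp add: abs_mult)
    hence "int (a f * f) = int (a f0 * f0)" unfolding a_def by simp
    thus ?thesis by (simp only: of_nat_eq_iff)
  qed
  have key: "(n div f) * a f0 = (n div f0) * a f" if f: "f \<in> F" for f
  proof -
    have nf: "n div f * f = n" using fdvd[OF f] by simp
    have nf0: "n div f0 * f0 = n" using fdvd[OF f0(1)] by simp
    have "(n div f) * a f0 * f0 = (n div f) * (a f * f)" using af[OF f] by (simp add: mult_ac)
    also have "\<dots> = a f * n" using nf by (simp add: mult_ac)
    also have "\<dots> = (n div f0) * a f * f0" using nf0 by (simp add: mult_ac)
    finally show ?thesis using fpos[OF f0(1)] by simp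
  qed
  have gnz: "n div f \<noteq> 0" if f: "f \<in> F" for f
    using fdvd[OF f] fpos[OF f] n by (metis div_mult_self1_is_m dvd_div_mult_self mult_is_0 not_one_le_zero)
  obtain t w0 where tw0: "odd w0" "n div f0 = 2 ^ t * w0" using decomp2[OF gnz[OF f0(1)]] by blast
  have gform: "\<exists>w. odd w \<and> n div f = 2 ^ t * w" if f: "f \<in> F" for f
  proof -
    obtain r w where rw: "odd w" "n div f = 2 ^ r * w" using decomp2[OF gnz[OF f]] by blast
    have "2 ^ r * (w * a f0) = 2 ^ t * (w0 * a f)" using key[OF f] rw tw0 by (simp add: mult_ac)
    hence "r = t" using uniq2 rw(1) tw0(1) aodd[OF f] aodd[OF f0(1)] by simp
    thus ?thesis using rw by blast
  qed
  have part_a: "2 ^ (t + 1) dvd n"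
  proof -
    obtain f' where f': "f0 = 2 * f'" using feven[OF f0(1)] by (auto elim: evenE)
    have "n = (n div f0) * f0" using fdvd[OF f0(1)] by simp
    also have "\<dots> = 2 ^ (t + 1) * (w0 * f')" using tw0 f' by (simp add: mult_ac)
    finally show ?thesis by (metis dvd_triv_left)
  qed
  have part_b: "\<exists>w. odd w \<and> s = 2 ^ t * w" if s: "s \<in> S" for s
  proof -
    obtain f where f: "f \<in> F" "s \<in> Gn n (n div f)" using s SF by blast
    define g where "g = n div f"
    have gs: "gcd s n = g" using f(2) unfolding Gn_def g_def by simp
    obtain u where u: "s = g * u" using gs by (metis gcd_dvd1 dvdE)
    have nfg: "n = g * f" using fdvd[OF f(1)] unfolding g_def by simp
    have "g * gcd u f = g" using gs u nfg by (simp add: gcd_mult_left)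
    hence gu: "gcd u f = 1" using gnz[OF f(1)] unfolding g_def by simp
    have "odd u"
    proof
      assume "even u"
      hence "2 dvd gcd u f" using feven[OF f(1)] by simp
      thus False using gu by simp
    qed
    obtain w where w: "odd w" "g = 2 ^ t * w" using gform[OF f(1)] unfolding g_def by blast
    show ?thesis using w u \<open>odd u\<close> by (intro exI[of _ "w * u"]) (simp add: mult_ac)
  qed
  show ?thesis unfolding Vt_def using part_a part_b by blast
qed

lemma L4:
  assumes n: "n \<ge> 1" and Sb: "\<And>s. s \<in> S \<Longrightarrow> 1 \<le> s \<and> s < n"
    and closed: "\<And>s k. s \<in> S \<Longrightarrow> 1 \<le> k \<Longrightarrow> k \<le> n - 1 \<Longrightarrow> gcd k n = gcd s n \<Longrightarrow> k \<in> S"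
    and V: "Vt n S t"
  shows "even n \<and>
            (\<exists>F. F \<subseteq> {f. f dvd n} \<and> S = (\<Union>f\<in>F. Gn n (n div f)) \<and>
                 (\<exists>l0 :: int. \<forall>f\<in>F. \<exists>k :: int. odd k \<and> 2 * l0 = k * int f))"
proof -
  have n0: "n > 0" using n by simp
  obtain m where m: "n = 2 ^ (t + 1) * m" using V unfolding Vt_def by (auto elim: dvdE)
  have evn: "even n" using m by simp
  define F where "F = (\<lambda>s. n div gcd s n) ` S"
  have F1: "F \<subseteq> {f. f dvd n}" unfolding F_def by (auto simp: div_dvd_iff_mult n0)
  have dd: "n div (n div gcd s n) = gcd s n" for s using div_div_self[OF n0, of "gcd s n"] by simp
  have F2: "S = (\<Union>f\<in>F. Gn n (n div f))"
  proof
    show "S \<subseteq> (\<Union>f\<in>F. Gn n (n div f))"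
    proof
      fix s assume s: "s \<in> S"
      have "s \<in> Gn n (n div (n div gcd s n))" unfolding dd Gn_def using Sb[OF s] by auto
      thus "s \<in> (\<Union>f\<in>F. Gn n (n div f))" unfolding F_def using s by blast
    qed
    show "(\<Union>f\<in>F. Gn n (n div f)) \<subseteq> S"
    proof
      fix x assume "x \<in> (\<Union>f\<in>F. Gn n (n div f))"
      then obtain s where s: "s \<in> S" "x \<in> Gn n (n div (n div gcd s n))" unfolding F_def by blast
      hence "1 \<le> x" "x \<le> n - 1" "gcd x n = gcd s n" unfolding dd Gn_def by auto
      thus "x \<in> S" using closed[OF s(1)] by blast
    qed
  qed
  have F3: "\<forall>f\<in>F. \<exists>k :: int. odd k \<and> 2 * int m = k * int f"
  proof
    fix f assume "f \<in> F"
    then obtain s where s: "s \<in> S" "f = n div gcd s n" unfolding F_def by blast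
    obtain w where w: "odd w" "s = 2 ^ t * w" using V s(1) unfolding Vt_def by blast
    define h where "h = gcd w (2 * m)"
    have e: "n = 2 ^ t * (2 * m)" using m by (simp add: mult_ac)
    have g: "gcd s n = 2 ^ t * h" unfolding h_def w(2) e by (rule gcd_mult_distrib_nat[symmetric])
    have hodd: "odd h"
    proof
      assume "even h"
      hence "2 dvd w" unfolding h_def by (metis gcd_dvd1 dvd_trans)
      thus False using w(1) by simp
    qed
    have h2m: "h dvd 2 * m" unfolding h_def by simp
    have hpos: "h > 0" using hodd by (auto intro: Nat.gr0I)
    have "f = (2 ^ t * (2 * m)) div (2 ^ t * h)" unfolding s(2) g using e by simp
    also have "\<dots> = (2 * m) div h" by simp
    finally have "h * f = 2 * m" using h2m by simp
    hence "int h * int f = 2 * int m" by (metis of_nat_mult of_nat_numeral)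
    thus "\<exists>k :: int. odd k \<and> 2 * int m = k * int f" using hodd by (intro exI[of _ "int h"]) simp
  qed
  show ?thesis using evn F1 F2 F3 by blast
qed


theorem theorem3:
  fixes n :: nat and S :: "nat set"
  assumes "n \<ge> 1"
    and "valid_symbol n S"
    and "S \<noteq> {}"
    and "integral_circulant n S"
  shows "circ_bipartite n S \<longleftrightarrow>
           (even n \<and>
            (\<exists>F. F \<subseteq> {f. f dvd n} \<and> S = (\<Union>f\<in>F. Gn n (n div f)) \<and>
                 (\<exists>l0 :: int. \<forall>f\<in>F. \<exists>k :: int. odd k \<and> 2 * l0 = k * int f)))"
proof -
  have n0: "n > 0" using assms(1) by simp
  have Ssub: "S \<subseteq> {1..n-1}" using assms(2) unfolding valid_symbol_def by blast
  have Sb: "1 \<le> s \<and> s < n" if "s \<in> S" for s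
  proof -
    have "s \<in> {1..n-1}" using Ssub that by blast
    thus ?thesis using assms(1) by auto
  qed
  have Slt: "S \<subseteq> {..<n}" using Sb by auto
  have ints: "(\<Sum>s\<in>S. om n ^ (j * s)) \<in> \<int>" for j
    using assms(4) circ_eigen[OF n0 Slt, of j] unfolding integral_circulant_def by blast
  have closed: "k \<in> S" if "s \<in> S" "1 \<le> k" "k \<le> n - 1" "gcd k n = gcd s n" for s k
  proof -
    have "k < n" using that(3) n0 by simp
    moreover have "s > 0" using Sb[OF that(1)] by simp
    ultimately show ?thesis using gcd_closed[OF n0 Slt ints that(1)] that(4) by blast
  qed
  obtain s0 where s0: "s0 \<in> S" using assms(3) by blast
  show ?thesis
  proof
    assume bip: "circ_bipartite n S"
    obtain t where t: "Vt n S t" using L2[OF assms(1) assms(2) s0 bip] by blast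
    show "even n \<and>
            (\<exists>F. F \<subseteq> {f. f dvd n} \<and> S = (\<Union>f\<in>F. Gn n (n div f)) \<and>
                 (\<exists>l0 :: int. \<forall>f\<in>F. \<exists>k :: int. odd k \<and> 2 * l0 = k * int f))"
      by (rule L4[OF assms(1) Sb closed t])
  next
    assume "even n \<and>
            (\<exists>F. F \<subseteq> {f. f dvd n} \<and> S = (\<Union>f\<in>F. Gn n (n div f)) \<and>
                 (\<exists>l0 :: int. \<forall>f\<in>F. \<exists>k :: int. odd k \<and> 2 * l0 = k * int f))"
    then obtain F l0 where F: "F \<subseteq> {f. f dvd n}" "S = (\<Union>f\<in>F. Gn n (n div f))"
      "\<forall>f\<in>F. \<exists>k :: int. odd k \<and> 2 * l0 = k * int f" by blast
    obtain t where t: "Vt n S t" using L3[OF assms(1) F s0] by blast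
    show "circ_bipartite n S" by (rule L1[OF assms(1) t])
  qed
qed


end
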